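(* Let $u,v,w$ be words of length $N$ with $|u|_0=|v|_0=|w|_0=:N_0$ and $N_1:=N-N_0$. For every perfect matching $M$ of $G^N_o(u,w)$: $o_U(M)+o_D(M)+o_R(M)+o_L(M)=N(N-1)/2+N_1$, $\quad o_L(M)+o_D(M)=\mathrm{d}(w)-\mathrm{d}(u)$, $\quad o_U(M)+o_L(M)=N_0(N_0-1)/2+\mathrm{d}(w)$. For every perfect matching $M$ of $G^N_e(v,w)$: $e_U(M)+e_D(M)+e_R(M)+e_L(M)=N(N-1)/2+N_0$, $\quad e_L(M)+e_U(M)=\mathrm{d}(w)-\mathrm{d}(v)$, $\quad e_D(M)+e_L(M)=N_1(N_1-1)/2+\mathrm{d}(w)$.
   Context: Let $N\ge 1$. $G^N$ is the induced subgraph of the square lattice $\mathbb{Z}^2$ formed by $N$ consecutive, horizontally centred rows having $3,5,\dots,2N+1$ vertices from top to bottom. It is bipartite; vertices of the same colour as the leftmost vertex of each row are called odd, the others even. Let $B_1,\dots,B_N$ be the even vertices of the bottom row, $L_1,\dots,L_N$ the leftmost vertices of the rows, and $R_1,\dots,R_N$ the rightmost vertices of the rows, each family numbered from left to right (so $L_1$ is the leftmost vertex of the bottom row and $R_1$ the rightmost vertex of the top row). Words of length $N$ are $u=u_1\cdots u_N\in\{0,1\}^N$; $|u|_0,|u|_1$ count $0$s and $1$s; $\mathrm{d}(u)$ is the number of pairs $i<j$ with $u_i=1,u_j=0$. $G^N_o(u,w)$ is the induced subgraph of $G^N$ obtained by deleting all $R_i$, all $B_i$ with $w_i=0$, and all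 $L_i$ with $u_i=0$. $G^N_e(v,w)$ is the induced subgraph obtained by deleting all $L_i$, all $B_i$ with $w_i=1$, and all $R_i$ with $v_i=1$. For a perfect matching $M$ of $G^N_o(u,w)$, orient each edge from its odd endpoint to its even endpoint; $o_U(M),o_D(M),o_L(M),o_R(M)$ denote the numbers of edges pointing up, down, left, right respectively. For a perfect matching $M$ of $G^N_e(v,w)$, orient each edge from its even endpoint to its odd endpoint; $e_U(M),e_D(M),e_L(M),e_R(M)$ denote the numbers of edges pointing up, down, left, right. *)

theory Defs
  imports Main
begin

text \<open>Vertices are pairs (x, r) :: int \<times> int: r is the row index, r = 1 for the
top row and r = N for the bottom row (rows are numbered from top to bottom), and
x is the horizontal coordinate, the rows being centred at x = 0, so row r consists
of the 2r+1 vertices with -r \<le> x \<le> r.  "Up" means towards smaller r.\<close>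

type_synonym vertex = "int \<times> int"

definition GN :: "nat \<Rightarrow> vertex set" where
  "GN N = {(x, r). 1 \<le> r \<and> r \<le> int N \<and> \<bar>x\<bar> \<le> r}"

definition lattice_adj :: "vertex \<Rightarrow> vertex \<Rightarrow> bool" where
  "lattice_adj p q \<longleftrightarrow> \<bar>fst p - fst q\<bar> + \<bar>snd p - snd q\<bar> = 1"

text \<open>The leftmost vertex (-r, r) of every row has x + r even; these are the odd vertices.\<close>
definition odd_vertex :: "vertex \<Rightarrow> bool" where
  "odd_vertex p \<longleftrightarrow> even (fst p + snd p)"

definition even_vertex :: "vertex \<Rightarrow> bool" where
  "even_vertex p \<longleftrightarrow> odd (fst p + snd p)"

definition Bv :: "nat \<Rightarrow> nat \<Rightarrow> vertex" where
  "Bv N i = (- int N + 2 * int i - 1, int N)"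

definition Lv :: "nat \<Rightarrow> nat \<Rightarrow> vertex" where
  "Lv N i = (- (int N + 1 - int i), int N + 1 - int i)"

definition Rv :: "nat \<Rightarrow> nat \<Rightarrow> vertex" where
  "Rv N i = (int i, int i)"

text \<open>Words of length N over {0,1} are lists of naturals; letter u_i is u ! (i - 1).\<close>
definition is_word :: "nat \<Rightarrow> nat list \<Rightarrow> bool" where
  "is_word N u \<longleftrightarrow> length u = N \<and> set u \<subseteq> {0, 1}"

definition count0 :: "nat list \<Rightarrow> nat" where
  "count0 u = length (filter (\<lambda>a. a = 0) u)"

definition count1 :: "nat list \<Rightarrow> nat" where
  "count1 u = length (filter (\<lambda>a. a = 1) u)"

definition dinv :: "nat list \<Rightarrow> nat" where
  "dinv u = card {(i, j). i < j \<and> j < length u \<and> u ! i = 1 \<and> u ! j = 0}"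

definition Go :: "nat \<Rightarrow> nat list \<Rightarrow> nat list \<Rightarrow> vertex set" where
  "Go N u w = GN N - {Rv N i | i. 1 \<le> i \<and> i \<le> N}
                   - {Bv N i | i. 1 \<le> i \<and> i \<le> N \<and> w ! (i - 1) = 0}
                   - {Lv N i | i. 1 \<le> i \<and> i \<le> N \<and> u ! (i - 1) = 0}"

definition Ge :: "nat \<Rightarrow> nat list \<Rightarrow> nat list \<Rightarrow> vertex set" where
  "Ge N v w = GN N - {Lv N i | i. 1 \<le> i \<and> i \<le> N}
                   - {Bv N i | i. 1 \<le> i \<and> i \<le> N \<and> w ! (i - 1) = 1}
                   - {Rv N i | i. 1 \<le> i \<and> i \<le> N \<and> v ! (i - 1) = 1}"

definition perfect_matching :: "vertex set \<Rightarrow> vertex set set \<Rightarrow> bool" where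
  "perfect_matching V M \<longleftrightarrow>
     (\<forall>e\<in>M. \<exists>p q. e = {p, q} \<and> p \<in> V \<and> q \<in> V \<and> lattice_adj p q) \<and>
     (\<forall>p\<in>V. \<exists>!e. e \<in> M \<and> p \<in> e)"

definition up :: "vertex \<Rightarrow> vertex" where "up p = (fst p, snd p - 1)"
definition down :: "vertex \<Rightarrow> vertex" where "down p = (fst p, snd p + 1)"
definition left :: "vertex \<Rightarrow> vertex" where "left p = (fst p - 1, snd p)"
definition right :: "vertex \<Rightarrow> vertex" where "right p = (fst p + 1, snd p)"

definition count_dir :: "(vertex \<Rightarrow> bool) \<Rightarrow> (vertex \<Rightarrow> vertex) \<Rightarrow> vertex set set \<Rightarrow> nat" where
  "count_dir P dir M = card {e \<in> M. \<exists>p. P p \<and> e = {p, dir p}}"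

definition oU where "oU = count_dir odd_vertex up"
definition oD where "oD = count_dir odd_vertex down"
definition oL where "oL = count_dir odd_vertex left"
definition oR where "oR = count_dir odd_vertex right"
definition eU where "eU = count_dir even_vertex up"
definition eD where "eD = count_dir even_vertex down"
definition eL where "eL = count_dir even_vertex left"
definition eR where "eR = count_dir even_vertex right"

end

theory Submission
  imports Defs
begin


lemma adj_dirs: "lattice_adj p q \<longleftrightarrow> q = up p \<or> q = down p \<or> q = left p \<or> q = right p"
  by (cases p; cases q) (auto simp: lattice_adj_def up_def down_def left_def right_def abs_if)

lemma adj_simps[simp]: "lattice_adj p (up p)" "lattice_adj p (down p)" "lattice_adj p (left p)" "lattice_adj p (right p)"
  by (auto simp: adj_dirs)

lemma flip_odd: "lattice_adj p q \<Longrightarrow> odd_vertex q \<longleftrightarrow> \<not> odd_vertex p"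
  by (cases p; cases q) (auto simp: adj_dirs odd_vertex_def up_def down_def left_def right_def)

lemma flip_even: "lattice_adj p q \<Longrightarrow> even_vertex q \<longleftrightarrow> \<not> even_vertex p"
  by (cases p; cases q) (auto simp: adj_dirs even_vertex_def up_def down_def left_def right_def)

lemma adj_neq: "lattice_adj p q \<Longrightarrow> p \<noteq> q"
  by (auto simp: lattice_adj_def)

lemma pm_facts:
  assumes pm: "perfect_matching V M" and fV: "finite V"
  shows "finite M" "\<Union>M = V" "\<forall>A\<in>M. \<forall>B\<in>M. A \<noteq> B \<longrightarrow> A \<inter> B = {}"
    "\<forall>e\<in>M. card e = 2" "\<forall>e\<in>M. finite e"
proof -
  have M1: "\<forall>e\<in>M. \<exists>p q. e = {p, q} \<and> p \<in> V \<and> q \<in> V \<and> lattice_adj p q"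
   and M2: "\<forall>p\<in>V. \<exists>!e. e \<in> M \<and> p \<in> e" using pm by (auto simp: perfect_matching_def)
  have "M \<subseteq> Pow V"
  proof
    fix e assume "e \<in> M"
    then obtain p q where "e = {p,q}" "p \<in> V" "q \<in> V" using M1 by meson
    then show "e \<in> Pow V" by auto
  qed
  then show "finite M" by (rule finite_subset[OF _ finite_Pow_iff[THEN iffD2, OF fV]])
  show UV: "\<Union>M = V"
  proof
    show "\<Union>M \<subseteq> V"
    proof
      fix x assume "x \<in> \<Union>M"
      then obtain e where "e \<in> M" "x \<in> e" by blast
      then obtain p q where "e = {p,q}" "p \<in> V" "q \<in> V" using M1 by meson
      then show "x \<in> V" using \<open>x \<in> e\<close> by auto
    qed
    show "V \<subseteq> \<Union>M" using M2 by blast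
  qed
  show "\<forall>A\<in>M. \<forall>B\<in>M. A \<noteq> B \<longrightarrow> A \<inter> B = {}"
  proof (intro ballI impI)
    fix A B assume "A \<in> M" "B \<in> M" "A \<noteq> B"
    show "A \<inter> B = {}"
    proof (rule ccontr)
      assume "A \<inter> B \<noteq> {}" then obtain p where "p \<in> A" "p \<in> B" by blast
      moreover have "p \<in> V" using UV \<open>A \<in> M\<close> \<open>p \<in> A\<close> by blast
      ultimately show False using M2 \<open>A \<in> M\<close> \<open>B \<in> M\<close> \<open>A \<noteq> B\<close> by blast
    qed
  qed
  show "\<forall>e\<in>M. card e = 2"
  proof
    fix e assume "e \<in> M"
    then obtain p q where "e = {p,q}" "lattice_adj p q" using M1 by meson
    then show "card e = 2" using adj_neq by auto
  qed
  then show "\<forall>e\<in>M. finite e" using card.infinite by fastforce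
qed

definition Md :: "(vertex \<Rightarrow> bool) \<Rightarrow> (vertex \<Rightarrow> vertex) \<Rightarrow> vertex set set \<Rightarrow> vertex set set" where
  "Md P d M = {e \<in> M. \<exists>p. P p \<and> e = {p, d p}}"

lemma count_dir_Md: "count_dir P d M = card (Md P d M)"
  by (simp add: count_dir_def Md_def)

lemma Md_cover:
  assumes pm: "perfect_matching V M" and flip: "\<And>p q. lattice_adj p q \<Longrightarrow> P q \<longleftrightarrow> \<not> P p"
  shows "M = Md P up M \<union> Md P down M \<union> Md P left M \<union> Md P right M"
proof
  show "Md P up M \<union> Md P down M \<union> Md P left M \<union> Md P right M \<subseteq> M" by (auto simp: Md_def)
  show "M \<subseteq> Md P up M \<union> Md P down M \<union> Md P left M \<union> Md P right M"
  proof
    fix e assume "e \<in> M"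
    then obtain p q where e: "e = {p,q}" "lattice_adj p q" using pm by (auto simp: perfect_matching_def)
    have "lattice_adj q p" using e(2) by (auto simp: lattice_adj_def abs_minus_commute)
    show "e \<in> Md P up M \<union> Md P down M \<union> Md P left M \<union> Md P right M"
    proof (cases "P p")
      case True
      then show ?thesis using e \<open>e \<in> M\<close> unfolding Md_def adj_dirs by blast
    next
      case False
      then have "P q" using flip[OF e(2)] by simp
      have "e = {q, p}" using e by (simp add: insert_commute)
      then show ?thesis using \<open>P q\<close> \<open>e \<in> M\<close> \<open>lattice_adj q p\<close> unfolding Md_def adj_dirs
        by blast
    qed
  qed
qed

lemma Md_disj:
  assumes flip: "\<And>p q. lattice_adj p q \<Longrightarrow> P q \<longleftrightarrow> \<not> P p"
    and "\<And>p. d p \<noteq> d' p" "\<And>p. lattice_adj p (d p)" "\<And>p. lattice_adj p (d' p)"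
  shows "Md P d M \<inter> Md P d' M = {}"
proof (rule ccontr)
  assume "Md P d M \<inter> Md P d' M \<noteq> {}"
  then obtain p p' where pp: "P p" "P p'" "{p, d p} = {p', d' p'}" by (auto simp: Md_def)
  show False
  proof (cases "p = p'")
    case True then show ?thesis using pp assms(2)[of p] assms(3)[of p] adj_neq
      by (metis doubleton_eq_iff)
  next
    case False
    then have "p = d' p'" using pp by (metis doubleton_eq_iff)
    then show ?thesis using pp flip[OF assms(4)[of p']] by simp
  qed
qed

lemma dir_neqs: "up p \<noteq> down p" "up p \<noteq> left p" "up p \<noteq> right p" "down p \<noteq> left p"
  "down p \<noteq> right p" "left p \<noteq> right p"
  by (auto simp: up_def down_def left_def right_def prod_eq_iff)

lemma pm_main:
  assumes pm: "perfect_matching V M" and fV: "finite V"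
    and flip: "\<And>p q. lattice_adj p q \<Longrightarrow> P q \<longleftrightarrow> \<not> P p"
    and fu: "\<And>p. f (up p) = f p + cu" and fd: "\<And>p. f (down p) = f p + cd"
    and fl: "\<And>p. f (left p) = f p + cl" and fr: "\<And>p. f (right p) = f p + cr"
  shows "(\<Sum>v\<in>V. (if P v then -1 else 1) * f v) =
     cu * int (card (Md P up M)) + cd * int (card (Md P down M))
     + cl * int (card (Md P left M)) + cr * int (card (Md P right M))"
    and "card V = 2 * (card (Md P up M) + card (Md P down M) + card (Md P left M) + card (Md P right M))"
proof -
  note F = pm_facts[OF pm fV]
  define h where "h v = (if P v then -1 else 1) * f v" for v
  have d1: "Md P up M \<inter> Md P down M = {}" "Md P up M \<inter> Md P left M = {}" "Md P up M \<inter> Md P right M = {}"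
    "Md P down M \<inter> Md P left M = {}" "Md P down M \<inter> Md P right M = {}" "Md P left M \<inter> Md P right M = {}"
    by (rule Md_disj[OF flip]; simp add: dir_neqs)+
  have fin: "finite (Md P d M)" for d using F(1) by (auto simp: Md_def)
  have cov: "M = Md P up M \<union> Md P down M \<union> Md P left M \<union> Md P right M" by (rule Md_cover[OF pm flip])
  have gen: "(\<Sum>e\<in>Md P d M. sum h e) = c * int (card (Md P d M))"
    if fdc: "\<And>p. f (d p) = f p + c" and adj: "\<And>p. lattice_adj p (d p)" for d c
  proof -
    have "sum h e = c" if "e \<in> Md P d M" for e
    proof -
      obtain p where p: "P p" "e = {p, d p}" using \<open>e \<in> Md P d M\<close> by (auto simp: Md_def)
      have "p \<noteq> d p" using adj_neq adj by blast
      have "\<not> P (d p)" using flip[OF adj] p(1) by simp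
      then show ?thesis using p \<open>p \<noteq> d p\<close> by (simp add: h_def fdc)
    qed
    then show ?thesis by simp
  qed
  have "(\<Sum>v\<in>V. h v) = (\<Sum>e\<in>M. sum h e)"
    using sum.Union_disjoint[of M h] F by simp
  also have "\<dots> = (\<Sum>e\<in>Md P up M. sum h e) + (\<Sum>e\<in>Md P down M. sum h e)
     + (\<Sum>e\<in>Md P left M. sum h e) + (\<Sum>e\<in>Md P right M. sum h e)"
    apply (subst cov)
    apply (subst sum.union_disjoint, (use fin d1 in auto)[3])+
    by simp
  finally show "(\<Sum>v\<in>V. (if P v then -1 else 1) * f v) =
     cu * int (card (Md P up M)) + cd * int (card (Md P down M))
     + cl * int (card (Md P left M)) + cr * int (card (Md P right M))"
    using gen[OF fu] gen[OF fd] gen[OF fl] gen[OF fr] by (simp add: h_def)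
  have "card V = (\<Sum>e\<in>M. card e)"
    using card_Union_disjoint[of M] F by (simp add: pairwise_def disjnt_def)
  also have "\<dots> = 2 * card M" using F by simp
  also have "card M = card (Md P up M) + card (Md P down M) + card (Md P left M) + card (Md P right M)"
    apply (subst cov)
    apply (subst card_Un_disjoint, (use fin d1 in auto)[3])+
    by simp
  finally show "card V = 2 * (card (Md P up M) + card (Md P down M) + card (Md P left M) + card (Md P right M))" .
qed



definition zsum :: "nat list \<Rightarrow> nat" where
  "zsum w = (\<Sum>i<length w. if w ! i = 0 then 1 else 0)"
definition psum :: "nat list \<Rightarrow> nat" where
  "psum w = (\<Sum>i<length w. if w ! i = 0 then Suc i else 0)"

lemma zsum_Cons: "zsum (a # w) = (if a = 0 then 1 else 0) + zsum w"
  unfolding zsum_def by (simp add: sum.lessThan_Suc_shift del: sum.lessThan_Suc)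

lemma psum_Cons: "psum (a # w) = (if a = 0 then 1 else 0) + psum w + zsum w"
proof -
  have "(\<Sum>i<length w. if w!i=0 then Suc (Suc i) else 0) = psum w + zsum w"
    unfolding psum_def zsum_def sum.distrib[symmetric] by (rule sum.cong) auto
  then show ?thesis unfolding psum_def[of "a#w"]
    by (simp add: sum.lessThan_Suc_shift del: sum.lessThan_Suc)
qed

lemma count0_zsum: "count0 w = zsum w"
  by (induction w) (auto simp: count0_def zsum_Cons zsum_def[of "[]"])

definition dset :: "nat list \<Rightarrow> (nat \<times> nat) set" where
  "dset u = {(i, j). i < j \<and> j < length u \<and> u ! i = 1 \<and> u ! j = 0}"

lemma dset_fin: "finite (dset u)"
  by (rule finite_subset[of _ "{..<length u} \<times> {..<length u}"]) (auto simp: dset_def)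

lemma dset_Cons: "dset (a # w) = (if a = 1 then (\<lambda>j. (0, Suc j)) ` {j. j < length w \<and> w ! j = 0} else {})
   \<union> (\<lambda>(i, j). (Suc i, Suc j)) ` dset w"
proof (intro set_eqI iffI)
  fix x assume x: "x \<in> dset (a # w)"
  obtain i j where ij: "x = (i, j)" by fastforce
  show "x \<in> (if a = 1 then (\<lambda>j. (0, Suc j)) ` {j. j < length w \<and> w ! j = 0} else {})
   \<union> (\<lambda>(i, j). (Suc i, Suc j)) ` dset w"
  proof (cases i)
    case 0
    then obtain j' where "j = Suc j'" using x ij by (cases j) (auto simp: dset_def)
    then show ?thesis using x ij 0 by (auto simp: dset_def)
  next
    case (Suc i')
    then obtain j' where "j = Suc j'" using x ij by (cases j) (auto simp: dset_def)
    then have "(i', j') \<in> dset w" using x ij Suc by (auto simp: dset_def)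
    then show ?thesis using ij Suc \<open>j = Suc j'\<close> by (auto intro!: image_eqI[where x="(i',j')"])
  qed
next
  fix x assume "x \<in> (if a = 1 then (\<lambda>j. (0, Suc j)) ` {j. j < length w \<and> w ! j = 0} else {})
   \<union> (\<lambda>(i, j). (Suc i, Suc j)) ` dset w"
  then show "x \<in> dset (a # w)" by (auto simp: dset_def split: if_splits)
qed

lemma dinv_Cons: "dinv (a # w) = dinv w + (if a = 1 then zsum w else 0)"
proof -
  have "dinv (a # w) = card (dset (a # w))" by (simp add: dinv_def dset_def)
  also have "\<dots> = card (if a = 1 then (\<lambda>j. (0::nat, Suc j)) ` {j. j < length w \<and> w ! j = 0} else {})
     + card ((\<lambda>(i, j). (Suc i, Suc j)) ` dset w)"
    unfolding dset_Cons by (rule card_Un_disjoint) (auto simp: dset_fin)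
  also have "card ((\<lambda>(i, j). (Suc i, Suc j)) ` dset w) = card (dset w)"
    by (rule card_image) (auto simp: inj_on_def)
  also have "card (dset w) = dinv w" by (simp add: dinv_def dset_def)
  also have "card (if a = 1 then (\<lambda>j. (0::nat, Suc j)) ` {j. j < length w \<and> w ! j = 0} else {})
     = (if a = 1 then zsum w else 0)"
  proof -
    have "card ((\<lambda>j. (0::nat, Suc j)) ` {j. j < length w \<and> w ! j = 0}) = card {j. j < length w \<and> w ! j = 0}"
      by (rule card_image) (auto simp: inj_on_def)
    also have "\<dots> = count0 w" by (simp add: count0_def length_filter_conv_card)
    finally show ?thesis by (simp add: count0_zsum)
  qed
  finally show ?thesis by simp
qed

lemma dinv_psum: "set w \<subseteq> {0,1} \<Longrightarrow> 2 * dinv w + zsum w * (zsum w + 1) = 2 * psum w"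
proof (induction w)
  case Nil then show ?case by (simp add: dinv_def zsum_def psum_def)
next
  case (Cons a w)
  then have "a = 0 \<or> a = 1" "2 * dinv w + zsum w * (zsum w + 1) = 2 * psum w" by auto
  then show ?case by (auto simp: dinv_Cons zsum_Cons psum_Cons algebra_simps)
qed



lemma GN_eq: "GN N = (\<lambda>(i,x). (x, int (Suc i))) ` (SIGMA i:{..<N}. {-int (Suc i)..int (Suc i)})"
proof (intro set_eqI iffI)
  fix v assume "v \<in> GN N"
  then obtain x r where v: "v = (x, r)" "1 \<le> r" "r \<le> int N" "\<bar>x\<bar> \<le> r" by (auto simp: GN_def)
  then show "v \<in> (\<lambda>(i,x). (x, int (Suc i))) ` (SIGMA i:{..<N}. {-int (Suc i)..int (Suc i)})"
    by (auto intro!: image_eqI[where x="(nat (r - 1), x)"])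
qed (auto simp: GN_def)

lemma GN_fin: "finite (GN N)" by (simp add: GN_eq)

lemma GN_sum: "(\<Sum>v\<in>GN N. h v) = (\<Sum>i<N. \<Sum>x\<in>{-int (Suc i)..int (Suc i)}. h (x, int (Suc i)))"
proof -
  have "(\<Sum>v\<in>GN N. h v) = (\<Sum>p\<in>(SIGMA i:{..<N}. {-int (Suc i)..int (Suc i)}). h (snd p, int (Suc (fst p))))"
    unfolding GN_eq by (subst sum.reindex) (auto simp: inj_on_def intro!: sum.cong)
  also have "\<dots> = (\<Sum>i<N. \<Sum>x\<in>{-int (Suc i)..int (Suc i)}. h (x, int (Suc i)))"
    by (subst sum.Sigma) (auto simp: case_prod_beta)
  finally show ?thesis .
qed

lemma row_x: "(\<Sum>x\<in>{-r..r}. (if even (x + r) then a else b) * x) = (0::int)"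
proof -
  let ?g = "\<lambda>x. (if even (x + r) then a else b) * x"
  have "(\<Sum>x\<in>{-r..r}. ?g x) = (\<Sum>x\<in>{-r..r}. ?g (- x))"
    by (rule sum.reindex_bij_witness[where i=uminus and j=uminus]) auto
  also have "\<dots> = - (\<Sum>x\<in>{-r..r}. ?g x)"
  proof -
    have eq: "?g (-x) = - ?g x" for x
    proof -
      have "even (-x + r) = even (x + r)"
        by (metis add.commute add_diff_cancel_left' diff_add_cancel even_add even_minus)
      then show ?thesis by simp
    qed
    have "(\<Sum>x\<in>{-r..r}. ?g (- x)) = (\<Sum>x\<in>{-r..r}. - ?g x)" by (rule sum.cong[OF refl eq])
    then show ?thesis by (simp only: sum_negf)
  qed
  finally show ?thesis by simp
qed

lemma nat_par: "(\<Sum>k\<le>2*n. if even k then a else b) = (int n + 1) * a + int n * (b::int)"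
proof (induction n)
  case 0 then show ?case by simp
next
  case (Suc n)
  have "2 * Suc n = Suc (Suc (2 * n))" by simp
  then show ?case using Suc by (simp add: algebra_simps)
qed

lemma row_par: "(\<Sum>x\<in>{-int n..int n}. if even (x + int n) then a else b) = (int n + 1) * a + int n * (b::int)"
proof -
  have "(\<Sum>x\<in>{-int n..int n}. if even (x + int n) then a else b) = (\<Sum>k\<le>2*n. if even (int k) then a else b)"
    apply (rule sum.reindex_bij_witness[where j="\<lambda>x. nat (x + int n)" and i="\<lambda>k. int k - int n"])
    apply simp_all
    apply arith+
    done
  then show ?thesis using nat_par by simp
qed

lemma gauss_int: "2 * (\<Sum>i<N. int (Suc i)) = int N * (int N + 1)"
  by (induction N) (auto simp: algebra_simps)

lemma GN_card: "int (card (GN N)) = int N * (int N + 2)"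
proof -
  have "int (card (GN N)) = (\<Sum>v\<in>GN N. 1::int)" by simp
  also have "\<dots> = (\<Sum>i<N. 2 * int (Suc i) + 1)" unfolding GN_sum by simp
  also have "\<dots> = int N * (int N + 2)" by (induction N) (auto simp: algebra_simps)
  finally show ?thesis .
qed

lemma GN_fst: "(\<Sum>v\<in>GN N. (if even (fst v + snd v) then a else b) * fst v) = (0::int)"
  unfolding GN_sum fst_conv snd_conv by (simp only: row_x sum.neutral_const)

lemma GN_snd: "(\<Sum>v\<in>GN N. (if even (fst v + snd v) then a else b) * snd v) = (\<Sum>i<N. int (Suc i) * (a * (int (Suc i) + 1) + b * int (Suc i)))"
  unfolding GN_sum
proof (rule sum.cong[OF refl])
  fix i
  have "(\<Sum>x\<in>{-int (Suc i)..int (Suc i)}. (if even (x + int (Suc i)) then a else b) * int (Suc i))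
     = int (Suc i) * (\<Sum>x\<in>{-int (Suc i)..int (Suc i)}. (if even (x + int (Suc i)) then a else b))"
    by (simp add: sum_distrib_left mult.commute)
  also have "\<dots> = int (Suc i) * (a * (int (Suc i) + 1) + b * int (Suc i))"
    by (subst row_par) (simp add: algebra_simps)
  finally show "(\<Sum>x\<in>{-int (Suc i)..int (Suc i)}. (if even (fst (x, int (Suc i)) + snd (x, int (Suc i))) then a else b) * snd (x, int (Suc i)))
     = int (Suc i) * (a * (int (Suc i) + 1) + b * int (Suc i))" by simp
qed

lemma sum_diff3:
  fixes h :: "'a \<Rightarrow> int"
  assumes "finite G" "X1 \<subseteq> G" "X2 \<subseteq> G" "X3 \<subseteq> G" "X1 \<inter> X2 = {}" "X1 \<inter> X3 = {}" "X2 \<inter> X3 = {}"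
  shows "sum h (G - X1 - X2 - X3) = sum h G - sum h X1 - sum h X2 - sum h X3"
proof -
  have f: "finite X1" "finite X2" "finite X3" using assms finite_subset by blast+
  have "G - X1 - X2 - X3 = G - (X1 \<union> X2 \<union> X3)" by blast
  then have "sum h (G - X1 - X2 - X3) = sum h G - sum h (X1 \<union> X2 \<union> X3)"
    using assms by (simp add: sum_diff)
  also have "sum h (X1 \<union> X2 \<union> X3) = sum h X1 + sum h X2 + sum h X3"
    using assms f by (simp add: sum.union_disjoint Int_Un_distrib2)
  finally show ?thesis by simp
qed

lemma setQ: "{f i | i. 1 \<le> i \<and> i \<le> N \<and> Q (i - 1)} = (\<lambda>i. f (Suc i)) ` {i. i < N \<and> Q i}"
proof (intro set_eqI iffI)
  fix y assume "y \<in> {f i | i. 1 \<le> i \<and> i \<le> N \<and> Q (i - 1)}"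
  then obtain i where "y = f i" "1 \<le> i" "i \<le> N" "Q (i - 1)" by blast
  then show "y \<in> (\<lambda>i. f (Suc i)) ` {i. i < N \<and> Q i}"
    by (intro image_eqI[where x="i - 1"]) auto
qed force

lemma setA: "{f i | i. 1 \<le> i \<and> i \<le> N} = (\<lambda>i. f (Suc i)) ` {i. i < N \<and> True}"
  using setQ[of f N "\<lambda>_. True"] by simp

lemma sum_img:
  fixes h :: "'a \<Rightarrow> int"
  assumes "inj f"
  shows "sum h ((\<lambda>i. f (Suc i)) ` {i. i < N \<and> Q i}) = (\<Sum>i<N. if Q i then h (f (Suc i)) else 0)"
proof -
  have "inj_on (\<lambda>i. f (Suc i)) {i. i < N \<and> Q i}" using assms by (auto simp: inj_on_def inj_def)
  then have "sum h ((\<lambda>i. f (Suc i)) ` {i. i < N \<and> Q i}) = (\<Sum>i\<in>{i. i < N \<and> Q i}. h (f (Suc i)))"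
    by (simp add: sum.reindex)
  also have "\<dots> = (\<Sum>i\<in>{i\<in>{..<N}. Q i}. h (f (Suc i)))" by (rule sum.cong) auto
  also have "\<dots> = (\<Sum>i<N. if Q i then h (f (Suc i)) else 0)"
    by (rule sum.inter_filter) simp
  finally show ?thesis .
qed

lemma inj_R: "inj (Rv N)" by (auto simp: inj_def Rv_def)
lemma inj_B: "inj (Bv N)" by (auto simp: inj_def Bv_def)
lemma inj_L: "inj (Lv N)" by (auto simp: inj_def Lv_def)

lemma R_GN: "(\<lambda>i. Rv N (Suc i)) ` {i. i < N \<and> Q i} \<subseteq> GN N" by (auto simp: Rv_def GN_def)
lemma B_GN: "(\<lambda>i. Bv N (Suc i)) ` {i. i < N \<and> Q i} \<subseteq> GN N" by (auto simp: Bv_def GN_def)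
lemma L_GN: "(\<lambda>i. Lv N (Suc i)) ` {i. i < N \<and> Q i} \<subseteq> GN N" by (auto simp: Lv_def GN_def)

lemma RB: "(\<lambda>i. Rv N (Suc i)) ` {i. i < N \<and> Q i} \<inter> (\<lambda>i. Bv N (Suc i)) ` {i. i < N \<and> Q' i} = {}"
  by (auto simp: Rv_def Bv_def)
lemma RL: "(\<lambda>i. Rv N (Suc i)) ` {i. i < N \<and> Q i} \<inter> (\<lambda>i. Lv N (Suc i)) ` {i. i < N \<and> Q' i} = {}"
  by (auto simp: Rv_def Lv_def)
lemma BL: "(\<lambda>i. Bv N (Suc i)) ` {i. i < N \<and> Q i} \<inter> (\<lambda>i. Lv N (Suc i)) ` {i. i < N \<and> Q' i} = {}"
  by (auto simp: Lv_def Bv_def)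



lemma zlin: assumes "length w = N"
  shows "(\<Sum>i<N. if w ! i = 0 then c * int (Suc i) + d else 0) = c * int (psum w) + d * int (zsum w)"
proof -
  have "(\<Sum>i<N. if w ! i = 0 then c * int (Suc i) + d else 0)
      = (\<Sum>i<N. c * int (if w ! i = 0 then Suc i else 0) + d * int (if w ! i = 0 then 1 else 0))"
    by (rule sum.cong) auto
  also have "\<dots> = c * (\<Sum>i<N. int (if w ! i = 0 then Suc i else 0)) + d * (\<Sum>i<N. int (if w ! i = 0 then 1 else 0))"
    by (simp add: sum.distrib sum_distrib_left)
  also have "\<dots> = c * int (psum w) + d * int (zsum w)"
    using assms by (simp only: psum_def zsum_def of_nat_sum)
  finally show ?thesis .
qed

lemma olin: assumes "length w = N" "set w \<subseteq> {0,1}"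
  shows "(\<Sum>i<N. if w ! i = 1 then c * int (Suc i) + d else 0)
     = c * (\<Sum>i<N. int (Suc i)) + d * int N - c * int (psum w) - d * int (zsum w)"
proof -
  have "(\<Sum>i<N. if w ! i = 1 then c * int (Suc i) + d else 0)
     = (\<Sum>i<N. (c * int (Suc i) + d) - (if w ! i = 0 then c * int (Suc i) + d else 0))"
  proof (rule sum.cong[OF refl])
    fix i assume "i \<in> {..<N}"
    then have "w ! i \<in> {0,1}" using assms nth_mem by fastforce
    then show "(if w ! i = 1 then c * int (Suc i) + d else 0) = (c * int (Suc i) + d) - (if w ! i = 0 then c * int (Suc i) + d else 0)"
      by auto
  qed
  also have "\<dots> = (\<Sum>i<N. c * int (Suc i) + d) - (\<Sum>i<N. if w ! i = 0 then c * int (Suc i) + d else 0)"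
    by (rule sum_subtractf)
  also have "(\<Sum>i<N. c * int (Suc i) + d) = c * (\<Sum>i<N. int (Suc i)) + d * int N"
    by (simp add: sum.distrib sum_distrib_left del: of_nat_Suc)
  also have "(\<Sum>i<N. if w ! i = 0 then c * int (Suc i) + d else 0) = c * int (psum w) + d * int (zsum w)"
    by (rule zlin[OF assms(1)])
  finally show ?thesis by simp
qed

lemma setW: "{f i | i. 1 \<le> i \<and> i \<le> N \<and> xs ! (i - 1) = a} = (\<lambda>i. f (Suc i)) ` {i. i < N \<and> xs ! i = a}"
  by (rule setQ)

lemma tri: "int (n * (n - 1) div 2) * 2 = int n * (int n - 1)"
proof -
  have "even (n * (n - 1))" by (cases "even n") auto
  then have "n * (n - 1) div 2 * 2 = n * (n - 1)" by simp
  have "int (n * (n - 1) div 2) * 2 = int (n * (n - 1) div 2 * 2)" by simp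
  also have "\<dots> = int (n * (n - 1))" using \<open>n * (n - 1) div 2 * 2 = n * (n - 1)\<close> by simp
  also have "\<dots> = int n * (int n - 1)" by (cases n) (auto simp: algebra_simps)
  finally show ?thesis .
qed

lemma alin: "(\<Sum>i<N. c * int (Suc i) + d) = c * (\<Sum>i<N. int (Suc i)) + d * int N"
  by (simp add: sum.distrib sum_distrib_left del: of_nat_Suc)

lemma go_part:
  assumes wu: "is_word N u" and ww: "is_word N w" and c0: "count0 u = count0 w"
    and pm: "perfect_matching (Go N u w) M"
  shows "oU M + oD M + oR M + oL M = N * (N - 1) div 2 + (N - count0 w) \<and>
            int (oL M + oD M) = int (dinv w) - int (dinv u) \<and>
            oU M + oL M = count0 w * (count0 w - 1) div 2 + dinv w"
proof -
  define R where "R = (\<lambda>i. Rv N (Suc i)) ` {i. i < N \<and> True}"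
  define B where "B = (\<lambda>i. Bv N (Suc i)) ` {i. i < N \<and> w ! i = 0}"
  define L where "L = (\<lambda>i. Lv N (Suc i)) ` {i. i < N \<and> u ! i = 0}"
  have V: "Go N u w = GN N - R - B - L" unfolding Go_def R_def B_def L_def setA setW ..
  have sd: "sum h (Go N u w) = sum h (GN N) - sum h R - sum h B - sum h L" for h :: "vertex \<Rightarrow> int"
    unfolding V R_def B_def L_def by (rule sum_diff3[OF GN_fin R_GN B_GN L_GN RB RL BL])
  have finV: "finite (Go N u w)" using GN_fin by (simp add: V)
  have lu: "length u = N" "set u \<subseteq> {0,1}" and lw: "length w = N" "set w \<subseteq> {0,1}"
    using wu ww by (auto simp: is_word_def)
  define G where "G = (\<Sum>i<N. int (Suc i))"
  define z where "z = int (zsum w)"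
  have zu: "int (zsum u) = z" using c0 by (simp add: z_def count0_zsum)
  define pw where "pw = int (psum w)"
  define pu where "pu = int (psum u)"
  let ?s = "\<lambda>v. if odd_vertex v then -1 else (1::int)"
  let ?U = "int (oU M)" let ?D = "int (oD M)" let ?L = "int (oL M)" let ?R = "int (oR M)"
  have m1: "(\<Sum>v\<in>Go N u w. ?s v * fst v) = - ?L + ?R"
    using pm_main(1)[OF pm finV flip_odd, where f=fst and cu=0 and cd=0 and cl="-1" and cr=1]
    by (simp add: up_def down_def left_def right_def oL_def oR_def count_dir_Md)
  have m2: "(\<Sum>v\<in>Go N u w. ?s v * snd v) = - ?U + ?D"
    using pm_main(1)[OF pm finV flip_odd, where f=snd and cu="-1" and cd=1 and cl=0 and cr=0]
    by (simp add: up_def down_def left_def right_def oU_def oD_def count_dir_Md)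
  have m3: "card (Go N u w) = 2 * (oU M + oD M + oL M + oR M)"
    using pm_main(2)[OF pm finV flip_odd, where f=snd and cu="-1" and cd=1 and cl=0 and cr=0]
    by (simp add: up_def down_def left_def right_def oU_def oD_def oL_def oR_def count_dir_Md)
  have c1: "(\<Sum>v\<in>Go N u w. ?s v * fst v) = G - 2 * pw + pu"
  proof -
    have g: "(\<Sum>v\<in>GN N. ?s v * fst v) = 0"
      unfolding odd_vertex_def by (rule GN_fst)
    have r: "(\<Sum>v\<in>R. ?s v * fst v) = - G"
      unfolding R_def G_def sum_img[OF inj_R] by (simp add: Rv_def odd_vertex_def sum_negf del: of_nat_Suc)
    have b: "(\<Sum>v\<in>B. ?s v * fst v) = 2 * pw + (- int N - 1) * z"
    proof -
      have "(\<Sum>v\<in>B. ?s v * fst v) = (\<Sum>i<N. if w ! i = 0 then 2 * int (Suc i) + (- int N - 1) else 0)"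
        unfolding B_def sum_img[OF inj_B] by (rule sum.cong) (auto simp: Bv_def odd_vertex_def)
      then show ?thesis using zlin[OF lw(1)] by (simp add: pw_def z_def)
    qed
    have l: "(\<Sum>v\<in>L. ?s v * fst v) = - pu + (int N + 1) * z"
    proof -
      have "(\<Sum>v\<in>L. ?s v * fst v) = (\<Sum>i<N. if u ! i = 0 then (-1) * int (Suc i) + (int N + 1) else 0)"
        unfolding L_def sum_img[OF inj_L] by (rule sum.cong) (auto simp: Lv_def odd_vertex_def)
      then show ?thesis using zlin[OF lu(1)] zu by (simp add: pu_def)
    qed
    show ?thesis using g r b l by (simp add: sd algebra_simps)
  qed
  have c2: "(\<Sum>v\<in>Go N u w. ?s v * snd v) = z - pu"
  proof -
    have g: "(\<Sum>v\<in>GN N. ?s v * snd v) = - G"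
      unfolding odd_vertex_def GN_snd G_def sum_negf[symmetric] by (rule sum.cong) (simp_all add: algebra_simps)
    have r: "(\<Sum>v\<in>R. ?s v * snd v) = - G"
      unfolding R_def G_def sum_img[OF inj_R] by (simp add: Rv_def odd_vertex_def sum_negf del: of_nat_Suc)
    have b: "(\<Sum>v\<in>B. ?s v * snd v) = int N * z"
    proof -
      have "(\<Sum>v\<in>B. ?s v * snd v) = (\<Sum>i<N. if w ! i = 0 then 0 * int (Suc i) + int N else 0)"
        unfolding B_def sum_img[OF inj_B] by (rule sum.cong) (auto simp: Bv_def odd_vertex_def)
      then show ?thesis using zlin[OF lw(1)] by (simp add: pw_def z_def)
    qed
    have l: "(\<Sum>v\<in>L. ?s v * snd v) = pu - (int N + 1) * z"
    proof -
      have "(\<Sum>v\<in>L. ?s v * snd v) = (\<Sum>i<N. if u ! i = 0 then 1 * int (Suc i) + (- int N - 1) else 0)"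
        unfolding L_def sum_img[OF inj_L] by (rule sum.cong) (auto simp: Lv_def odd_vertex_def)
      then show ?thesis using zlin[OF lu(1)] zu by (simp add: pu_def algebra_simps)
    qed
    show ?thesis using g r b l by (simp add: sd algebra_simps)
  qed
  have c3: "int (card (Go N u w)) = int N * (int N + 2) - int N - 2 * z"
  proof -
    have e: "int (card A) = (\<Sum>v\<in>A. 1::int)" for A :: "vertex set" by simp
    have r: "(\<Sum>v\<in>R. 1::int) = int N"
      unfolding R_def sum_img[OF inj_R] by simp
    have b: "(\<Sum>v\<in>B. 1::int) = z"
    proof -
      have "(\<Sum>v\<in>B. 1::int) = (\<Sum>i<N. if w ! i = 0 then 0 * int (Suc i) + 1 else 0)"
        unfolding B_def sum_img[OF inj_B] by (rule sum.cong) auto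
      then show ?thesis using zlin[OF lw(1)] by (simp add: z_def)
    qed
    have l: "(\<Sum>v\<in>L. 1::int) = z"
    proof -
      have "(\<Sum>v\<in>L. 1::int) = (\<Sum>i<N. if u ! i = 0 then 0 * int (Suc i) + 1 else 0)"
        unfolding L_def sum_img[OF inj_L] by (rule sum.cong) auto
      then show ?thesis using zlin[OF lu(1)] zu by simp
    qed
    show ?thesis unfolding e sd using r b l GN_card[of N] by simp
  qed
  have dw: "2 * int (dinv w) + z * (z + 1) = 2 * pw"
  proof -
    have "int (2 * dinv w + zsum w * (zsum w + 1)) = int (2 * psum w)" using dinv_psum[OF lw(2)] by simp
    then show ?thesis unfolding z_def pw_def by (simp add: algebra_simps)
  qed
  have du: "2 * int (dinv u) + z * (z + 1) = 2 * pu"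
  proof -
    have "int (2 * dinv u + zsum u * (zsum u + 1)) = int (2 * psum u)" using dinv_psum[OF lu(2)] by simp
    then show ?thesis using zu unfolding pu_def by (simp add: algebra_simps)
  qed
  have gG: "2 * G = int N * (int N + 1)" unfolding G_def by (rule gauss_int)
  have cz: "count0 w = zsum w" by (rule count0_zsum)
  have zN: "zsum w \<le> N" using lw(1) unfolding cz[symmetric] count0_def by (metis length_filter_le)
  have ev1: "int (N * (N - 1) div 2) * 2 = int N * (int N - 1)" by (rule tri)
  have ev2: "int (zsum w * (zsum w - 1) div 2) * 2 = z * (z - 1)" unfolding z_def by (rule tri)
  have T: "2 * (?U + ?D + ?L + ?R) = int N * int N + int N - 2 * z"
  proof -
    have "int (card (Go N u w)) = 2 * (?U + ?D + ?L + ?R)" using m3 by simp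
    then show ?thesis using c3 by (simp add: algebra_simps)
  qed
  have XR: "?R - ?L = G - 2 * pw + pu" using m1 c1 by simp
  have YD: "?D - ?U = z - pu" using m2 c2 by simp
  have gG': "2 * G = int N * int N + int N" using gG by (simp add: algebra_simps)
  have dw': "2 * int (dinv w) + z * z + z = 2 * pw" using dw by (simp add: algebra_simps)
  have du': "2 * int (dinv u) + z * z + z = 2 * pu" using du by (simp add: algebra_simps)
  have ev1': "int (N * (N - 1) div 2) * 2 = int N * int N - int N" using ev1 by (simp add: algebra_simps)
  have ev2': "int (zsum w * (zsum w - 1) div 2) * 2 = z * z - z" using ev2 by (simp add: algebra_simps)
  have zd: "int (N - count0 w) = int N - z" using zN unfolding cz z_def by simp
  define X1 where "X1 = int (N * (N - 1) div 2)"
  define X2 where "X2 = int (zsum w * (zsum w - 1) div 2)"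
  define K where "K = int N * int N"
  define ZZ where "ZZ = z * z"
  have T': "2 * (?U + ?D + ?L + ?R) = K + int N - 2 * z" using T unfolding K_def .
  have gG'': "2 * G = K + int N" using gG' unfolding K_def .
  have dw'': "2 * int (dinv w) + ZZ + z = 2 * pw" using dw' unfolding ZZ_def .
  have du'': "2 * int (dinv u) + ZZ + z = 2 * pu" using du' unfolding ZZ_def .
  have ev1'': "X1 * 2 = K - int N" using ev1' unfolding X1_def K_def .
  have ev2'': "X2 * 2 = ZZ - z" using ev2' unfolding X2_def ZZ_def .
  have A: "int (oU M + oD M + oR M + oL M) = int (N * (N - 1) div 2 + (N - count0 w))"
  proof -
    have h1: "int (oU M + oD M + oR M + oL M) = ?U + ?D + ?R + ?L" by simp
    have h2: "int (N * (N - 1) div 2 + (N - count0 w)) = X1 + (int N - z)"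
      using zd unfolding X1_def by simp
    have e: "?U + ?D + ?R + ?L = X1 + (int N - z)" using T' ev1'' by algebra
    show ?thesis by (simp only: h1 h2 e)
  qed
  have Bq: "int (oL M + oD M) = int (dinv w) - int (dinv u)"
  proof -
    have h1: "int (oL M + oD M) = ?L + ?D" by simp
    have e: "?L + ?D = int (dinv w) - int (dinv u)" using T' XR YD gG'' dw'' du'' by algebra
    show ?thesis by (simp only: h1 e)
  qed
  have C: "int (oU M + oL M) = int (zsum w * (zsum w - 1) div 2 + dinv w)"
  proof -
    have h1: "int (oU M + oL M) = ?U + ?L" by simp
    have h2: "int (zsum w * (zsum w - 1) div 2 + dinv w) = X2 + int (dinv w)" unfolding X2_def by simp
    have e: "?U + ?L = X2 + int (dinv w)" using T' XR YD gG'' dw'' ev2'' by algebra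
    show ?thesis by (simp only: h1 h2 e)
  qed
  show ?thesis using A Bq C unfolding cz by (simp only: of_nat_eq_iff)
qed

lemma ge_part:
  assumes wv: "is_word N v" and ww: "is_word N w" and c0: "count0 v = count0 w"
    and pm: "perfect_matching (Ge N v w) M"
  shows "eU M + eD M + eR M + eL M = N * (N - 1) div 2 + count0 w \<and>
            int (eL M + eU M) = int (dinv w) - int (dinv v) \<and>
            eD M + eL M = (N - count0 w) * (N - count0 w - 1) div 2 + dinv w"
proof -
  define L where "L = (\<lambda>i. Lv N (Suc i)) ` {i. i < N \<and> True}"
  define B where "B = (\<lambda>i. Bv N (Suc i)) ` {i. i < N \<and> w ! i = 1}"
  define R where "R = (\<lambda>i. Rv N (Suc i)) ` {i. i < N \<and> v ! i = 1}"
  have V: "Ge N v w = GN N - L - B - R" unfolding Ge_def R_def B_def L_def setA setW ..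
  have LB: "L \<inter> B = {}" unfolding L_def B_def by (subst Int_commute) (rule BL)
  have LR: "L \<inter> R = {}" unfolding L_def R_def by (subst Int_commute) (rule RL)
  have BR: "B \<inter> R = {}" unfolding B_def R_def by (subst Int_commute) (rule RB)
  have LG: "L \<subseteq> GN N" unfolding L_def by (rule L_GN)
  have BG: "B \<subseteq> GN N" unfolding B_def by (rule B_GN)
  have RG: "R \<subseteq> GN N" unfolding R_def by (rule R_GN)
  have sd: "sum h (Ge N v w) = sum h (GN N) - sum h L - sum h B - sum h R" for h :: "vertex \<Rightarrow> int"
    unfolding V by (rule sum_diff3[OF GN_fin LG BG RG LB LR BR])
  have finV: "finite (Ge N v w)" using GN_fin by (simp add: V)
  have lv: "length v = N" "set v \<subseteq> {0,1}" and lw: "length w = N" "set w \<subseteq> {0,1}"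
    using wv ww by (auto simp: is_word_def)
  define G where "G = (\<Sum>i<N. int (Suc i))"
  define z where "z = int (zsum w)"
  have zv: "int (zsum v) = z" using c0 by (simp add: z_def count0_zsum)
  define pw where "pw = int (psum w)"
  define pv where "pv = int (psum v)"
  let ?s = "\<lambda>v. if even_vertex v then -1 else (1::int)"
  have sg: "?s p = (if even (fst p + snd p) then 1 else -1)" for p by (simp add: even_vertex_def)
  let ?U = "int (eU M)" let ?D = "int (eD M)" let ?L = "int (eL M)" let ?R = "int (eR M)"
  have m1: "(\<Sum>v\<in>Ge N v w. ?s v * fst v) = - ?L + ?R"
    using pm_main(1)[OF pm finV flip_even, where f=fst and cu=0 and cd=0 and cl="-1" and cr=1]
    by (simp add: up_def down_def left_def right_def eL_def eR_def count_dir_Md)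
  have m2: "(\<Sum>v\<in>Ge N v w. ?s v * snd v) = - ?U + ?D"
    using pm_main(1)[OF pm finV flip_even, where f=snd and cu="-1" and cd=1 and cl=0 and cr=0]
    by (simp add: up_def down_def left_def right_def eU_def eD_def count_dir_Md)
  have m3: "card (Ge N v w) = 2 * (eU M + eD M + eL M + eR M)"
    using pm_main(2)[OF pm finV flip_even, where f=snd and cu="-1" and cd=1 and cl=0 and cr=0]
    by (simp add: up_def down_def left_def right_def eU_def eD_def eL_def eR_def count_dir_Md)
  have c1: "(\<Sum>v\<in>Ge N v w. ?s v * fst v) = -2 * pw + (int N + 1) * z + pv"
  proof -
    have g: "(\<Sum>v\<in>GN N. ?s v * fst v) = 0"
      unfolding sg by (rule GN_fst)
    have l: "(\<Sum>v\<in>L. ?s v * fst v) = G + (- int N - 1) * int N"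
    proof -
      have "(\<Sum>v\<in>L. ?s v * fst v) = (\<Sum>i<N. 1 * int (Suc i) + (- int N - 1))"
        unfolding L_def sum_img[OF inj_L] by (rule sum.cong) (auto simp: Lv_def even_vertex_def)
      then show ?thesis unfolding alin G_def by simp
    qed
    have b: "(\<Sum>v\<in>B. ?s v * fst v) = (-2) * G + (int N + 1) * int N - (-2) * pw - (int N + 1) * z"
    proof -
      have "(\<Sum>v\<in>B. ?s v * fst v) = (\<Sum>i<N. if w ! i = 1 then (-2) * int (Suc i) + (int N + 1) else 0)"
        unfolding B_def sum_img[OF inj_B] by (rule sum.cong) (auto simp: Bv_def even_vertex_def)
      then show ?thesis using olin[OF lw] by (simp add: pw_def z_def G_def)
    qed
    have r: "(\<Sum>v\<in>R. ?s v * fst v) = G - pv"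
    proof -
      have "(\<Sum>v\<in>R. ?s v * fst v) = (\<Sum>i<N. if v ! i = 1 then 1 * int (Suc i) + 0 else 0)"
        unfolding R_def sum_img[OF inj_R] by (rule sum.cong) (auto simp: Rv_def even_vertex_def)
      then show ?thesis using olin[OF lv] by (simp add: pv_def G_def)
    qed
    show ?thesis using g r b l by (simp add: sd algebra_simps)
  qed
  have c2: "(\<Sum>v\<in>Ge N v w. ?s v * snd v) = G - int N - int N * z + pv"
  proof -
    have g: "(\<Sum>v\<in>GN N. ?s v * snd v) = G"
      unfolding sg GN_snd G_def by (rule sum.cong) (simp_all add: algebra_simps)
    have l: "(\<Sum>v\<in>L. ?s v * snd v) = - G + (int N + 1) * int N"
    proof -
      have "(\<Sum>v\<in>L. ?s v * snd v) = (\<Sum>i<N. (-1) * int (Suc i) + (int N + 1))"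
        unfolding L_def sum_img[OF inj_L] by (rule sum.cong) (auto simp: Lv_def even_vertex_def)
      then show ?thesis unfolding alin G_def by simp
    qed
    have b: "(\<Sum>v\<in>B. ?s v * snd v) = 0 * G + (- int N) * int N - 0 * pw - (- int N) * z"
    proof -
      have "(\<Sum>v\<in>B. ?s v * snd v) = (\<Sum>i<N. if w ! i = 1 then 0 * int (Suc i) + (- int N) else 0)"
        unfolding B_def sum_img[OF inj_B] by (rule sum.cong) (auto simp: Bv_def even_vertex_def)
      then show ?thesis using olin[OF lw] by (simp add: pw_def z_def G_def)
    qed
    have r: "(\<Sum>v\<in>R. ?s v * snd v) = G - pv"
    proof -
      have "(\<Sum>v\<in>R. ?s v * snd v) = (\<Sum>i<N. if v ! i = 1 then 1 * int (Suc i) + 0 else 0)"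
        unfolding R_def sum_img[OF inj_R] by (rule sum.cong) (auto simp: Rv_def even_vertex_def)
      then show ?thesis using olin[OF lv] by (simp add: pv_def G_def)
    qed
    have gG: "2 * G = int N * (int N + 1)" unfolding G_def by (rule gauss_int)
    show ?thesis using g r b l gG by (simp add: sd algebra_simps)
  qed
  have c3: "int (card (Ge N v w)) = int N * (int N + 2) - int N - 2 * (int N - z)"
  proof -
    have e: "int (card A) = (\<Sum>v\<in>A. 1::int)" for A :: "vertex set" by simp
    have l: "(\<Sum>v\<in>L. 1::int) = int N"
      unfolding L_def sum_img[OF inj_L] by simp
    have b: "(\<Sum>v\<in>B. 1::int) = int N - z"
    proof -
      have "(\<Sum>v\<in>B. 1::int) = (\<Sum>i<N. if w ! i = 1 then 0 * int (Suc i) + 1 else 0)"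
        unfolding B_def sum_img[OF inj_B] by (rule sum.cong) auto
      then show ?thesis using olin[OF lw] by (simp add: z_def)
    qed
    have r: "(\<Sum>v\<in>R. 1::int) = int N - z"
    proof -
      have "(\<Sum>v\<in>R. 1::int) = (\<Sum>i<N. if v ! i = 1 then 0 * int (Suc i) + 1 else 0)"
        unfolding R_def sum_img[OF inj_R] by (rule sum.cong) auto
      then show ?thesis using olin[OF lv] zv by simp
    qed
    show ?thesis unfolding e sd using r b l GN_card[of N] by simp
  qed
  have dw: "2 * int (dinv w) + z * (z + 1) = 2 * pw"
  proof -
    have "int (2 * dinv w + zsum w * (zsum w + 1)) = int (2 * psum w)" using dinv_psum[OF lw(2)] by simp
    then show ?thesis unfolding z_def pw_def by (simp add: algebra_simps)
  qed
  have dv: "2 * int (dinv v) + z * (z + 1) = 2 * pv"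
  proof -
    have "int (2 * dinv v + zsum v * (zsum v + 1)) = int (2 * psum v)" using dinv_psum[OF lv(2)] by simp
    then show ?thesis using zv unfolding pv_def by (simp add: algebra_simps)
  qed
  have gG: "2 * G = int N * (int N + 1)" unfolding G_def by (rule gauss_int)
  have cz: "count0 w = zsum w" by (rule count0_zsum)
  have zN: "zsum w \<le> N" using lw(1) unfolding cz[symmetric] count0_def by (metis length_filter_le)
  have zd: "int (N - zsum w) = int N - z" using zN unfolding z_def by simp
  define X1 where "X1 = int (N * (N - 1) div 2)"
  define X3 where "X3 = int ((N - zsum w) * (N - zsum w - 1) div 2)"
  have ev1: "X1 * 2 = int N * (int N - 1)" unfolding X1_def by (rule tri)
  have ev3: "X3 * 2 = (int N - z) * ((int N - z) - 1)" unfolding X3_def zd[symmetric] by (rule tri)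
  have T: "int (card (Ge N v w)) = 2 * (?U + ?D + ?L + ?R)" using m3 by simp
  have A: "int (eU M + eD M + eR M + eL M) = int (N * (N - 1) div 2 + count0 w)"
  proof -
    have h1: "int (eU M + eD M + eR M + eL M) = ?U + ?D + ?R + ?L" by simp
    have h2: "int (N * (N - 1) div 2 + count0 w) = X1 + z" unfolding X1_def z_def cz by simp
    have e: "?U + ?D + ?R + ?L = X1 + z" using T c3 ev1 by algebra
    show ?thesis by (simp only: h1 h2 e)
  qed
  have Bq: "int (eL M + eU M) = int (dinv w) - int (dinv v)"
  proof -
    have h1: "int (eL M + eU M) = ?L + ?U" by simp
    have e: "?L + ?U = int (dinv w) - int (dinv v)" using T c3 m1 c1 m2 c2 gG dw dv by algebra
    show ?thesis by (simp only: h1 e)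
  qed
  have C: "int (eD M + eL M) = int ((N - zsum w) * (N - zsum w - 1) div 2 + dinv w)"
  proof -
    have h1: "int (eD M + eL M) = ?D + ?L" by simp
    have h2: "int ((N - zsum w) * (N - zsum w - 1) div 2 + dinv w) = X3 + int (dinv w)" unfolding X3_def by simp
    have e: "?D + ?L = X3 + int (dinv w)" using T c3 m1 c1 m2 c2 gG dw ev3 by algebra
    show ?thesis by (simp only: h1 h2 e)
  qed
  show ?thesis using A Bq C unfolding cz by (simp only: of_nat_eq_iff)
qed


theorem theorem3p5:
  fixes N :: nat and u v w :: "nat list"
  assumes "N \<ge> 1"
    and "is_word N u" and "is_word N v" and "is_word N w"
    and "count0 u = count0 w" and "count0 v = count0 w"
  shows "(\<forall>M. perfect_matching (Go N u w) M \<longrightarrow>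
            oU M + oD M + oR M + oL M = N * (N - 1) div 2 + (N - count0 w) \<and>
            int (oL M + oD M) = int (dinv w) - int (dinv u) \<and>
            oU M + oL M = count0 w * (count0 w - 1) div 2 + dinv w) \<and>
         (\<forall>M. perfect_matching (Ge N v w) M \<longrightarrow>
            eU M + eD M + eR M + eL M = N * (N - 1) div 2 + count0 w \<and>
            int (eL M + eU M) = int (dinv w) - int (dinv v) \<and>
            eD M + eL M = (N - count0 w) * (N - count0 w - 1) div 2 + dinv w)"
  using go_part[OF assms(2) assms(4) assms(5)] ge_part[OF assms(3) assms(4) assms(6)] by blast

end
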